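(* Let $A\in\mathbb{R}^{r\times n}$ ($r\le n$) have full row rank with thin SVD $A=U\Sigma V$, singular values $\sigma_1\ge\dots\ge\sigma_r>0$, and rows $V_1,\dots,V_r$ of $V$. Let $F\in\mathbb{R}^{K\times n}$ with rows $F_1,\dots,F_K$ satisfy $FA^T\ne0$, and let $\lambda'>0$. Let $D^*=FA^T(AA^T)^{-1}$ and $\tilde D^*=FA^T(AA^T+\lambda'I)^{-1}$. For $M\in\mathbb{R}^{K\times r}$ define $f(M)=\|F-MA\|_F^2$, $\epsilon(M)=f(M)/\|MA\|_F^2+1$, $\alpha(M)=\|M\|_F^2$, $\gamma(M)=\|M\|_F^2\|A\|_F^2/\|MA\|_F^2$. Let $a_i^2=\sum_{k=1}^K(F_kV_i^T)^2$ and $\Omega=\{j: a_j\neq0\}$. Then: (1) $f(\tilde D^* )>f(D^* )$; (2) $\epsilon(\tilde D^* )>\epsilon(D^* )$; (3) $\alpha(\tilde D^* )<\alpha(D^* )$; (4) if the values $\{\sigma_i\}_{i\in\Omega}$ are not all equal (in particular $|\Omega|>1$), then $\gamma(\tilde D^* )<\gamma(D^* )$, and otherwise $\gamma(\tilde D^* )=\gamma(D^* )$.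
   Context: $D^*$ minimizes $\|F-DA\|_F^2$ and $\tilde D^*$ minimizes $\|F-DA\|_F^2+\lambda'\|D\|_F^2$; $f,\epsilon,\alpha,\gamma$ are the absolute fitting error, fitting error, absolute spectral risk and spectral risk. *)

theory Defs
  imports "HOL-Analysis.Analysis"
begin

text \<open>Matrices are HOL-Analysis matrices real^'c^'r (rows indexed by 'r, columns by 'c).
The norm of such a matrix is the Euclidean norm of the vector of its rows,
i.e. the Frobenius norm.\<close>

definition frob :: "real^'c^'r \<Rightarrow> real" where
  "frob M = norm M"

definition diag_mat :: "('r::finite \<Rightarrow> real) \<Rightarrow> real^'r^'r" where
  "diag_mat s = (\<chi> i j. if i = j then s i else 0)"

definition abs_fit_err :: "real^'n^'k \<Rightarrow> real^'n^'r \<Rightarrow> real^'r^'k \<Rightarrow> real" where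
  "abs_fit_err F A M = (frob (F - M ** A))^2"

definition fit_err :: "real^'n^'k \<Rightarrow> real^'n^'r \<Rightarrow> real^'r^'k \<Rightarrow> real" where
  "fit_err F A M = abs_fit_err F A M / (frob (M ** A))^2 + 1"

definition abs_spec_risk :: "real^'r^'k \<Rightarrow> real" where
  "abs_spec_risk M = (frob M)^2"

definition spec_risk :: "real^'n^'r \<Rightarrow> real^'r^'k \<Rightarrow> real" where
  "spec_risk A M = (frob M)^2 * (frob A)^2 / (frob (M ** A))^2"

definition coef_a :: "real^'n^'k \<Rightarrow> real^'n^'r \<Rightarrow> 'r \<Rightarrow> real" where
  "coef_a F V i = sqrt (\<Sum>k\<in>UNIV. ((F $ k) \<bullet> (V $ i))^2)"

end

theory Submission
  imports Defs
begin

lemma inv_unique: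
  fixes A :: "real^'n^'n"
  assumes "A ** B = mat 1" "B ** A = mat 1"
  shows "matrix_inv A = B"
proof -
  have "\<exists>B'. A ** B' = mat 1 \<and> B' ** A = mat 1" using assms by blast
  then have C: "A ** matrix_inv A = mat 1 \<and> matrix_inv A ** A = mat 1"
    unfolding matrix_inv_def by (rule someI_ex)
  have "matrix_inv A = matrix_inv A ** (A ** B)" using assms by simp
  also have "\<dots> = B" using C by (simp add: matrix_mul_assoc)
  finally show ?thesis .
qed

lemma inner_mul_right:
  fixes X :: "real^'m^'k" and Q :: "real^'n^'m" and Y :: "real^'n^'k"
  shows "inner (X ** Q) Y = inner X (Y ** transpose Q)"
  apply (simp add: inner_vec_def matrix_matrix_mult_def transpose_def sum_distrib_left sum_distrib_right)
  apply (rule sum.cong, simp)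
  apply (subst sum.swap)
  apply (simp add: mult_ac)
  done

lemma norm_orth_right:
  fixes M :: "real^'m^'k" and Q :: "real^'n^'m"
  assumes "Q ** transpose Q = mat 1"
  shows "(norm (M ** Q))^2 = (norm M)^2"
  by (simp add: power2_norm_eq_inner inner_mul_right assms flip: matrix_mul_assoc)

lemma sum_if_left: fixes i :: "'a::finite" shows "(\<Sum>k\<in>UNIV. (if i = k then x else 0) * f k) = (x * f i :: real)"
proof -
  have "(\<Sum>k\<in>UNIV. (if i = k then x else 0) * f k) = (\<Sum>k\<in>UNIV. if i = k then x * f k else 0)"
    by (rule sum.cong) auto
  then show ?thesis by simp
qed
lemma diag_mult: "diag_mat a ** diag_mat b = diag_mat (\<lambda>i. a i * b i)"
  by (simp add: diag_mat_def matrix_matrix_mult_def vec_eq_iff sum_if_left)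

lemma diag_transpose: "transpose (diag_mat a) = diag_mat a"
  by (simp add: diag_mat_def transpose_def vec_eq_iff)

lemma diag_one: "diag_mat (\<lambda>_. 1) = mat 1"
  by (simp add: diag_mat_def mat_def)

lemma diag_add: "diag_mat a + diag_mat b = diag_mat (\<lambda>i. a i + b i)"
  by (simp add: diag_mat_def vec_eq_iff)

lemma diag_diff: "diag_mat a - diag_mat b = diag_mat (\<lambda>i. a i - b i)"
  by (simp add: diag_mat_def vec_eq_iff)

lemma diag_scale: "c *\<^sub>R diag_mat a = diag_mat (\<lambda>i. c * a i)"
  by (simp add: diag_mat_def vec_eq_iff)

lemma mul_diag_nth: "((G::real^'r^'k) ** diag_mat c) $ k $ i = G $ k $ i * c i"
  by (simp add: diag_mat_def matrix_matrix_mult_def mult_ac sum_if_left if_distrib cong: if_cong)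

lemma matrix_add_rdistrib': "((A::real^'m^'k) + B) ** C = A ** C + B ** C"
  by (vector matrix_matrix_mult_def sum.distrib[symmetric] field_simps)

lemma matrix_diff_rdistrib': "((A::real^'m^'k) - B) ** C = A ** C - B ** C"
  by (vector matrix_matrix_mult_def sum_subtractf[symmetric] field_simps)

lemma matrix_diff_ldistrib': "(C::real^'m^'k) ** (A - B) = C ** A - C ** B"
  by (vector matrix_matrix_mult_def sum_subtractf[symmetric] field_simps)

lemma norm_diag_sq:
  fixes G :: "real^'r^'k"
  shows "(norm (G ** diag_mat c))^2 = (\<Sum>i\<in>UNIV. (c i)^2 * (\<Sum>k\<in>UNIV. (G$k$i)^2))"
  apply (simp add: power2_norm_eq_inner inner_vec_def mul_diag_nth sum_distrib_left)
  apply (subst sum.swap)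
  apply (simp add: power2_eq_square mult_ac)
  done

lemma cheb:
  fixes w u x :: "'r::finite \<Rightarrow> real"
  shows "2 * ((\<Sum>i\<in>UNIV. u i * x i * w i) * (\<Sum>i\<in>UNIV. w i) - (\<Sum>i\<in>UNIV. x i * w i) * (\<Sum>i\<in>UNIV. u i * w i))
     = (\<Sum>i\<in>UNIV. \<Sum>j\<in>UNIV. w i * w j * ((u i - u j) * (x i - x j)))"
proof -
  have e: "\<And>i j. w i * w j * ((u i - u j) * (x i - x j)) =
     (u i * x i * w i) * w j - (x i * w i) * (u j * w j) - (x j * w j) * (u i * w i) + (u j * x j * w j) * w i"
    by (simp add: algebra_simps)
  have s1: "(\<Sum>i\<in>UNIV. \<Sum>j\<in>UNIV. (u j * x j * w j) * w i) = (\<Sum>i\<in>UNIV. \<Sum>j\<in>UNIV. (u i * x i * w i) * w j)"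
    by (rule sum.swap)
  have s2: "(\<Sum>i\<in>UNIV. \<Sum>j\<in>UNIV. (x j * w j) * (u i * w i)) = (\<Sum>i\<in>UNIV. \<Sum>j\<in>UNIV. (x i * w i) * (u j * w j))"
    by (rule sum.swap)
  show ?thesis
    unfolding e sum.distrib sum_subtractf s1 s2
    apply (simp add: sum_product algebra_simps)
    apply (subst sum.swap[of "\<lambda>i j. u j * (w i * (w j * x j))"])
    apply (subst sum.swap[of "\<lambda>i j. u j * (w i * (w j * x i))"])
    apply (simp add: mult_ac)
    done
qed

lemma real_part:
  fixes w \<sigma> :: "'r::finite \<Rightarrow> real" and lam c0 NA :: real
  assumes w: "\<And>i. w i \<ge> 0" and wex: "\<exists>i. w i > 0" and sp: "\<And>i. \<sigma> i > 0"
    and lam: "lam > 0" and c0: "c0 \<ge> 0" and NA: "NA > 0"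
  defines "t \<equiv> \<lambda>i. (\<sigma> i)^2 / ((\<sigma> i)^2 + lam)"
  shows "c0 < (\<Sum>i\<in>UNIV. (1 - t i)^2 * w i) + c0"
   and "c0 / (\<Sum>i\<in>UNIV. w i) + 1 < ((\<Sum>i\<in>UNIV. (1 - t i)^2 * w i) + c0) / (\<Sum>i\<in>UNIV. (t i)^2 * w i) + 1"
   and "(\<Sum>i\<in>UNIV. (\<sigma> i / ((\<sigma> i)^2 + lam))^2 * w i) < (\<Sum>i\<in>UNIV. (1 / \<sigma> i)^2 * w i)"
   and "if (\<exists>i j. w i \<noteq> 0 \<and> w j \<noteq> 0 \<and> \<sigma> i \<noteq> \<sigma> j)
        then (\<Sum>i\<in>UNIV. (\<sigma> i / ((\<sigma> i)^2 + lam))^2 * w i) * NA / (\<Sum>i\<in>UNIV. (t i)^2 * w i)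
           < (\<Sum>i\<in>UNIV. (1 / \<sigma> i)^2 * w i) * NA / (\<Sum>i\<in>UNIV. w i)
        else (\<Sum>i\<in>UNIV. (\<sigma> i / ((\<sigma> i)^2 + lam))^2 * w i) * NA / (\<Sum>i\<in>UNIV. (t i)^2 * w i)
           = (\<Sum>i\<in>UNIV. (1 / \<sigma> i)^2 * w i) * NA / (\<Sum>i\<in>UNIV. w i)"
proof -
  obtain i0 where i0: "w i0 > 0" using wex by blast
  have den: "(\<sigma> i)^2 + lam > 0" for i using lam by (intro add_nonneg_pos) auto
  have tpos: "t i > 0" for i using sp[of i] den[of i] unfolding t_def by (intro divide_pos_pos) auto
  have tlt: "t i < 1" for i using den[of i] lam unfolding t_def by (simp add: divide_less_eq)
  have "(1 - t i0)^2 > 0" using tlt[of i0] by simp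
  then have S0: "(\<Sum>i\<in>UNIV. (1 - t i)^2 * w i) > 0"
    by (intro sum_pos2[of UNIV i0]) (use i0 w in auto)
  show 1: "c0 < (\<Sum>i\<in>UNIV. (1 - t i)^2 * w i) + c0" using S0 by simp
  have "(t i0)^2 > 0" using tpos[of i0] by simp
  then have T0: "(\<Sum>i\<in>UNIV. (t i)^2 * w i) > 0"
    by (intro sum_pos2[of UNIV i0]) (use i0 w in auto)
  have tsq: "(t i)^2 < 1" for i using tpos[of i] tlt[of i]
    by (simp add: power_less_one_iff)
  have TS: "(\<Sum>i\<in>UNIV. (t i)^2 * w i) < (\<Sum>i\<in>UNIV. w i)"
  proof (rule sum_strict_mono_ex1)
    show "\<forall>i\<in>UNIV. (t i)\<^sup>2 * w i \<le> w i" using tsq w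
      by (simp add: mult_left_le_one_le less_imp_le)
    show "\<exists>i\<in>UNIV. (t i)\<^sup>2 * w i < w i" using tsq[of i0] i0 by (intro bexI[of _ i0]) auto
  qed auto
  have "c0 / (\<Sum>i\<in>UNIV. w i) \<le> c0 / (\<Sum>i\<in>UNIV. (t i)^2 * w i)"
    using TS T0 c0 by (intro divide_left_mono) auto
  also have "\<dots> < ((\<Sum>i\<in>UNIV. (1 - t i)^2 * w i) + c0) / (\<Sum>i\<in>UNIV. (t i)^2 * w i)"
    using 1 T0 by (intro divide_strict_right_mono) auto
  finally show "c0 / (\<Sum>i\<in>UNIV. w i) + 1 < ((\<Sum>i\<in>UNIV. (1 - t i)^2 * w i) + c0) / (\<Sum>i\<in>UNIV. (t i)^2 * w i) + 1"
    by simp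
  have pt: "(\<sigma> i / ((\<sigma> i)^2 + lam))^2 < (1 / \<sigma> i)^2" for i
  proof -
    have "\<sigma> i / ((\<sigma> i)^2 + lam) < 1 / \<sigma> i"
      using sp[of i] lam den[of i] by (simp add: field_simps power2_eq_square)
    moreover have "0 \<le> \<sigma> i / ((\<sigma> i)^2 + lam)" using sp[of i] den[of i] by simp
    ultimately show ?thesis by (rule power_strict_mono) auto
  qed
  show "(\<Sum>i\<in>UNIV. (\<sigma> i / ((\<sigma> i)^2 + lam))^2 * w i) < (\<Sum>i\<in>UNIV. (1 / \<sigma> i)^2 * w i)"
  proof (rule sum_strict_mono_ex1)
    show "\<forall>i\<in>UNIV. (\<sigma> i / ((\<sigma> i)^2 + lam))^2 * w i \<le> (1 / \<sigma> i)^2 * w i"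
      using pt w by (auto intro: mult_right_mono less_imp_le)
    show "\<exists>i\<in>UNIV. (\<sigma> i / ((\<sigma> i)^2 + lam))^2 * w i < (1 / \<sigma> i)^2 * w i"
      using pt[of i0] i0 by (intro bexI[of _ i0]) auto
  qed auto
  define u where "u i = (t i)^2" for i
  define x where "x i = (1 / \<sigma> i)^2" for i
  have dux: "(\<sigma> i / ((\<sigma> i)^2 + lam))^2 = u i * x i" for i
    using sp[of i] den[of i] unfolding u_def x_def t_def by (simp add: field_simps power2_eq_square)
  have mono: "u i < u j \<and> x j < x i" if "\<sigma> i < \<sigma> j" for i j
  proof -
    have "(\<sigma> i)^2 < (\<sigma> j)^2" using that sp[of i] by (simp add: power_strict_mono)
    then have "lam / ((\<sigma> j)^2 + lam) < lam / ((\<sigma> i)^2 + lam)"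
      using lam den by (intro divide_strict_left_mono) (auto intro: mult_pos_pos)
    moreover have "t k = 1 - lam / ((\<sigma> k)^2 + lam)" for k
      using den[of k] unfolding t_def by (simp add: field_simps)
    ultimately have "t i < t j" by simp
    then have "u i < u j" unfolding u_def using tpos[of i] by (simp add: power_strict_mono)
    moreover have "1 / \<sigma> j < 1 / \<sigma> i" using that sp[of i] by (simp add: divide_strict_left_mono)
    then have "x j < x i" unfolding x_def using sp[of j] by (intro power_strict_mono) auto
    ultimately show ?thesis by simp
  qed
  have neg: "(u i - u j) * (x i - x j) < 0" if "\<sigma> i \<noteq> \<sigma> j" for i j
  proof (cases "\<sigma> i < \<sigma> j")
    case True then show ?thesis using mono[of i j] by (simp add: mult_neg_pos)
  next
    case False then have "\<sigma> j < \<sigma> i" using that by simp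
    then show ?thesis using mono[of j i] by (simp add: mult_pos_neg)
  qed
  have nonpos: "w i * w j * ((u i - u j) * (x i - x j)) \<le> 0" for i j
  proof (cases "\<sigma> i = \<sigma> j")
    case True then show ?thesis by (simp add: u_def x_def t_def)
  next
    case False
    have "w i * w j \<ge> 0" using w[of i] w[of j] by simp
    then show ?thesis using neg[OF False] by (metis mult_nonneg_nonpos less_imp_le)
  qed
  define P1 where "P1 = (\<Sum>i\<in>UNIV. u i * x i * w i)"
  define Q1 where "Q1 = (\<Sum>i\<in>UNIV. u i * w i)"
  define P0 where "P0 = (\<Sum>i\<in>UNIV. x i * w i)"
  define Q0 where "Q0 = (\<Sum>i\<in>UNIV. w i)"
  have ch: "2 * (P1 * Q0 - P0 * Q1) = (\<Sum>i\<in>UNIV. \<Sum>j\<in>UNIV. w i * w j * ((u i - u j) * (x i - x j)))"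
    unfolding P1_def Q0_def P0_def Q1_def by (rule cheb)
  have Q1pos: "Q1 > 0" using T0 unfolding Q1_def u_def by simp
  have Q0pos: "Q0 > 0" using TS T0 unfolding Q0_def by simp
  have L: "(\<Sum>i\<in>UNIV. (\<sigma> i / ((\<sigma> i)^2 + lam))^2 * w i) = P1" unfolding P1_def dux ..
  have R: "(\<Sum>i\<in>UNIV. (1 / \<sigma> i)^2 * w i) = P0" unfolding P0_def x_def ..
  have T: "(\<Sum>i\<in>UNIV. (t i)^2 * w i) = Q1" unfolding Q1_def u_def ..
  show "if (\<exists>i j. w i \<noteq> 0 \<and> w j \<noteq> 0 \<and> \<sigma> i \<noteq> \<sigma> j)
        then (\<Sum>i\<in>UNIV. (\<sigma> i / ((\<sigma> i)^2 + lam))^2 * w i) * NA / (\<Sum>i\<in>UNIV. (t i)^2 * w i)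
           < (\<Sum>i\<in>UNIV. (1 / \<sigma> i)^2 * w i) * NA / (\<Sum>i\<in>UNIV. w i)
        else (\<Sum>i\<in>UNIV. (\<sigma> i / ((\<sigma> i)^2 + lam))^2 * w i) * NA / (\<Sum>i\<in>UNIV. (t i)^2 * w i)
           = (\<Sum>i\<in>UNIV. (1 / \<sigma> i)^2 * w i) * NA / (\<Sum>i\<in>UNIV. w i)"
    unfolding L R T Q0_def[symmetric]
  proof (split if_split, intro conjI impI)
    assume "\<exists>i j. w i \<noteq> 0 \<and> w j \<noteq> 0 \<and> \<sigma> i \<noteq> \<sigma> j"
    then obtain a b where ab: "w a \<noteq> 0" "w b \<noteq> 0" "\<sigma> a \<noteq> \<sigma> b" by blast
    have wa: "w a > 0" "w b > 0" using ab w[of a] w[of b] by auto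
    have "(\<Sum>i\<in>UNIV. \<Sum>j\<in>UNIV. w i * w j * ((u i - u j) * (x i - x j))) < (\<Sum>i\<in>(UNIV::'r set). 0)"
    proof (rule sum_strict_mono_ex1)
      show "\<forall>i\<in>UNIV. (\<Sum>j\<in>UNIV. w i * w j * ((u i - u j) * (x i - x j))) \<le> 0"
        using nonpos by (simp add: sum_nonpos)
      have "(\<Sum>j\<in>UNIV. w a * w j * ((u a - u j) * (x a - x j))) < (\<Sum>j\<in>(UNIV::'r set). 0)"
      proof (rule sum_strict_mono_ex1)
        show "\<forall>j\<in>UNIV. w a * w j * ((u a - u j) * (x a - x j)) \<le> 0" using nonpos by simp
        show "\<exists>j\<in>UNIV. w a * w j * ((u a - u j) * (x a - x j)) < 0"
          using neg[OF ab(3)] wa by (intro bexI[of _ b]) (auto intro: mult_pos_neg)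
      qed auto
      then show "\<exists>i\<in>UNIV. (\<Sum>j\<in>UNIV. w i * w j * ((u i - u j) * (x i - x j))) < 0"
        by (intro bexI[of _ a]) auto
    qed auto
    then have "P1 * Q0 < P0 * Q1" using ch by simp
    then have "P1 * Q0 * NA < P0 * Q1 * NA" using NA by simp
    then show "P1 * NA / Q1 < P0 * NA / Q0" using Q1pos Q0pos
      by (simp add: divide_simps mult_ac)
  next
    assume nex: "\<not> (\<exists>i j. w i \<noteq> 0 \<and> w j \<noteq> 0 \<and> \<sigma> i \<noteq> \<sigma> j)"
    have z: "w i * w j * ((u i - u j) * (x i - x j)) = 0" for i j
    proof (cases "w i = 0 \<or> w j = 0")
      case True then show ?thesis by auto
    next
      case False then have "\<sigma> i = \<sigma> j" using nex by blast
      then show ?thesis by (simp add: u_def x_def t_def)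
    qed
    have "(\<Sum>i\<in>UNIV. \<Sum>j\<in>UNIV. w i * w j * ((u i - u j) * (x i - x j))) = 0"
      by (simp only: z sum.neutral_const)
    then have "2 * (P1 * Q0 - P0 * Q1) = 0" using ch by simp
    then have "P1 * Q0 = P0 * Q1" by simp
    then show "P1 * NA / Q1 = P0 * NA / Q0" using Q1pos Q0pos
      by (simp add: divide_simps mult_ac)
  qed
qed

lemma fit_decomp:
  fixes F :: "real^'n^'k" and V :: "real^'n^'r" and G :: "real^'r^'k"
  assumes VV: "V ** transpose V = mat 1" and G: "G = F ** transpose V"
  shows "(norm (F - G ** diag_mat c ** V))^2 = (norm (G ** diag_mat (\<lambda>i. 1 - c i)))^2 + (norm (F - G ** V))^2"
proof -
  define X where "X = G ** diag_mat (\<lambda>i. 1 - c i)"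
  define Y where "Y = F - G ** V"
  have "X ** V = G ** V - G ** diag_mat c ** V"
    unfolding X_def diag_diff[symmetric] diag_one
    by (simp add: matrix_diff_ldistrib' matrix_diff_rdistrib')
  then have e: "F - G ** diag_mat c ** V = X ** V + Y" unfolding Y_def by simp
  have "Y ** transpose V = F ** transpose V - G ** (V ** transpose V)"
    unfolding Y_def by (simp add: matrix_diff_rdistrib' matrix_mul_assoc)
  then have Y0: "Y ** transpose V = 0" using VV G by simp
  have "(norm (F - G ** diag_mat c ** V))^2 = (norm (X ** V + Y))^2" by (simp only: e)
  also have "(norm (X ** V + Y))^2 = inner (X ** V) (X ** V) + 2 * inner (X ** V) Y + inner Y Y"
    by (simp add: power2_norm_eq_inner inner_add_left inner_add_right inner_commute)
  also have "inner (X ** V) Y = 0" by (simp add: inner_mul_right Y0)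
  also have "inner (X ** V) (X ** V) = (norm X)^2"
    using norm_orth_right[OF VV, of X] by (simp add: power2_norm_eq_inner)
  also have "(norm X)^2 + 2 * 0 + inner Y Y = (norm X)^2 + (norm Y)^2" by (simp add: power2_norm_eq_inner)
  finally show ?thesis unfolding X_def Y_def .
qed

theorem theorem8:
  fixes A :: "((real, 'n::finite) vec, 'r::{finite,linorder}) vec"
    and U :: "((real, 'r) vec, 'r) vec"
    and V :: "((real, 'n) vec, 'r) vec"
    and \<sigma> :: "'r \<Rightarrow> real"
    and F :: "real^'n^'k"
    and lam :: real
  assumes r_le_n: "CARD('r) \<le> CARD('n)"
    and full_row_rank: "rank A = CARD('r)"
    and U_orth: "transpose U ** U = mat 1" "U ** transpose U = mat 1"
    and V_rows_orthonormal: "V ** transpose V = mat 1"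
    and svd: "A = U ** diag_mat \<sigma> ** V"
    and sigma_sorted: "\<And>i j. i \<le> j \<Longrightarrow> \<sigma> j \<le> \<sigma> i"
    and sigma_pos: "\<And>i. \<sigma> i > 0"
    and FA_nz: "F ** transpose A \<noteq> 0"
    and lam_pos: "lam > 0"
  defines "Dstar \<equiv> F ** transpose A ** matrix_inv (A ** transpose A)"
    and "Dtil \<equiv> F ** transpose A ** matrix_inv (A ** transpose A + lam *\<^sub>R mat 1)"
    and "\<Omega> \<equiv> {j. coef_a F V j \<noteq> 0}"
  shows "abs_fit_err F A Dtil > abs_fit_err F A Dstar
       \<and> fit_err F A Dtil > fit_err F A Dstar
       \<and> abs_spec_risk Dtil < abs_spec_risk Dstar
       \<and> (if (\<exists>i\<in>\<Omega>. \<exists>j\<in>\<Omega>. \<sigma> i \<noteq> \<sigma> j)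
         then spec_risk A Dtil < spec_risk A Dstar
         else spec_risk A Dtil = spec_risk A Dstar)"
proof -
  define Ut where "Ut = transpose U"
  define Vt where "Vt = transpose V"
  define G where "G = F ** Vt"
  define w where "w i = (\<Sum>k\<in>UNIV. (G$k$i)^2)" for i
  have UtU: "Ut ** U = mat 1" using U_orth unfolding Ut_def by simp
  have UUt: "U ** Ut = mat 1" using U_orth unfolding Ut_def by simp
  have VVt: "V ** Vt = mat 1" using V_rows_orthonormal unfolding Vt_def by simp
  have At: "transpose A = Vt ** diag_mat \<sigma> ** Ut"
    by (simp add: svd matrix_transpose_mul diag_transpose Ut_def Vt_def matrix_mul_assoc)
  have inv: "matrix_inv (U ** diag_mat s ** Ut) = U ** diag_mat (\<lambda>i. 1 / s i) ** Ut"
    if s: "\<And>i. s i \<noteq> 0" for s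
  proof (rule inv_unique)
    have "U ** diag_mat s ** Ut ** (U ** diag_mat (\<lambda>i. 1 / s i) ** Ut)
        = U ** diag_mat s ** (Ut ** U) ** diag_mat (\<lambda>i. 1 / s i) ** Ut"
      by (simp add: matrix_mul_assoc)
    also have "\<dots> = U ** (diag_mat s ** diag_mat (\<lambda>i. 1 / s i)) ** Ut"
      by (simp add: matrix_mul_assoc UtU)
    also have "\<dots> = mat 1" using s by (simp add: diag_mult diag_one UUt)
    finally show "U ** diag_mat s ** Ut ** (U ** diag_mat (\<lambda>i. 1 / s i) ** Ut) = mat 1" .
    have "U ** diag_mat (\<lambda>i. 1 / s i) ** Ut ** (U ** diag_mat s ** Ut)
        = U ** diag_mat (\<lambda>i. 1 / s i) ** (Ut ** U) ** diag_mat s ** Ut"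
      by (simp add: matrix_mul_assoc)
    also have "\<dots> = U ** (diag_mat (\<lambda>i. 1 / s i) ** diag_mat s) ** Ut"
      by (simp add: matrix_mul_assoc UtU)
    also have "\<dots> = mat 1" using s by (simp add: diag_mult diag_one UUt)
    finally show "U ** diag_mat (\<lambda>i. 1 / s i) ** Ut ** (U ** diag_mat s ** Ut) = mat 1" .
  qed
  have "A ** transpose A = U ** diag_mat \<sigma> ** (V ** Vt) ** diag_mat \<sigma> ** Ut"
    unfolding At by (simp add: svd matrix_mul_assoc)
  also have "\<dots> = U ** (diag_mat \<sigma> ** diag_mat \<sigma>) ** Ut"
    by (simp add: VVt matrix_mul_assoc)
  finally have AAt: "A ** transpose A = U ** diag_mat (\<lambda>i. (\<sigma> i)^2) ** Ut"
    by (simp add: diag_mult power2_eq_square)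
  have lamI: "U ** diag_mat (\<lambda>_. lam) ** Ut = lam *\<^sub>R mat 1"
  proof -
    have "diag_mat (\<lambda>_. lam) = lam *\<^sub>R (mat 1 :: ((real,'r) vec,'r) vec)"
      by (simp add: diag_mat_def mat_def vec_eq_iff)
    then show ?thesis
      by (simp add: matrix_scalar_ac UUt flip: scalar_matrix_assoc)
  qed
  have AAtl: "A ** transpose A + lam *\<^sub>R mat 1 = U ** diag_mat (\<lambda>i. (\<sigma> i)^2 + lam) ** Ut"
    unfolding AAt lamI[symmetric] diag_add[symmetric]
    by (simp add: matrix_add_ldistrib matrix_add_rdistrib')
  have Dform: "F ** transpose A ** (U ** diag_mat (\<lambda>i. 1 / s i) ** Ut) = G ** diag_mat (\<lambda>i. \<sigma> i / s i) ** Ut" for s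
  proof -
    have "F ** transpose A ** (U ** diag_mat (\<lambda>i. 1 / s i) ** Ut)
       = G ** (diag_mat \<sigma> ** (Ut ** U) ** diag_mat (\<lambda>i. 1 / s i)) ** Ut"
      unfolding At G_def by (simp add: matrix_mul_assoc)
    then show ?thesis by (simp add: UtU diag_mult)
  qed
  have DAform: "G ** diag_mat c ** Ut ** A = G ** diag_mat (\<lambda>i. c i * \<sigma> i) ** V" for c
  proof -
    have "G ** diag_mat c ** Ut ** A = G ** (diag_mat c ** (Ut ** U) ** diag_mat \<sigma>) ** V"
      unfolding svd by (simp add: matrix_mul_assoc)
    then show ?thesis by (simp add: UtU diag_mult)
  qed
  have sq0: "\<And>i. (\<sigma> i)^2 \<noteq> 0" using sigma_pos by (metis less_irrefl power_not_zero)
  have den0: "\<And>i. (\<sigma> i)^2 + lam \<noteq> 0" using lam_pos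
    by (metis add_nonneg_pos less_irrefl zero_le_power2)
  have Ds: "Dstar = G ** diag_mat (\<lambda>i. \<sigma> i / (\<sigma> i)^2) ** Ut"
    unfolding Dstar_def AAt inv[OF sq0] Dform ..
  have Dt: "Dtil = G ** diag_mat (\<lambda>i. \<sigma> i / ((\<sigma> i)^2 + lam)) ** Ut"
    unfolding Dtil_def AAtl inv[OF den0] Dform ..
  have UtUt: "Ut ** transpose Ut = mat 1" using UtU unfolding Ut_def by simp
  have nD: "(frob (G ** diag_mat c ** Ut))^2 = (\<Sum>i\<in>UNIV. (c i)^2 * w i)" for c
    unfolding frob_def norm_orth_right[OF UtUt] norm_diag_sq w_def ..
  have nDA: "(frob (G ** diag_mat c ** Ut ** A))^2 = (\<Sum>i\<in>UNIV. (c i * \<sigma> i)^2 * w i)" for c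
    unfolding frob_def DAform norm_orth_right[OF V_rows_orthonormal] norm_diag_sq w_def ..
  define c0 where "c0 = (norm (F - G ** V))^2"
  have nF: "abs_fit_err F A (G ** diag_mat c ** Ut) = (\<Sum>i\<in>UNIV. (1 - c i * \<sigma> i)^2 * w i) + c0" for c
    unfolding abs_fit_err_def frob_def DAform fit_decomp[OF V_rows_orthonormal G_def[unfolded Vt_def]]
      norm_diag_sq w_def c0_def ..
  have sne: "\<And>i. \<sigma> i \<noteq> 0" using sigma_pos by (metis less_irrefl)
  have e1: "\<And>i. \<sigma> i / (\<sigma> i)^2 = 1 / \<sigma> i" using sne by (simp add: power2_eq_square)
  have e2: "\<And>i. \<sigma> i / ((\<sigma> i)^2 + lam) * \<sigma> i = (\<sigma> i)^2 / ((\<sigma> i)^2 + lam)"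
    by (simp add: power2_eq_square)
  have fS: "abs_fit_err F A Dstar = c0" unfolding Ds nF using sne by (simp add: e1)
  have fT: "abs_fit_err F A Dtil = (\<Sum>i\<in>UNIV. (1 - (\<sigma> i)^2 / ((\<sigma> i)^2 + lam))^2 * w i) + c0"
    unfolding Dt nF e2 ..
  have aS: "(frob (Dstar ** A))^2 = (\<Sum>i\<in>UNIV. w i)" unfolding Ds nDA using sne by (simp add: e1)
  have aT: "(frob (Dtil ** A))^2 = (\<Sum>i\<in>UNIV. ((\<sigma> i)^2 / ((\<sigma> i)^2 + lam))^2 * w i)"
    unfolding Dt nDA e2 ..
  have dS: "(frob Dstar)^2 = (\<Sum>i\<in>UNIV. (1 / \<sigma> i)^2 * w i)" unfolding Ds nD e1 ..
  have dT: "(frob Dtil)^2 = (\<Sum>i\<in>UNIV. (\<sigma> i / ((\<sigma> i)^2 + lam))^2 * w i)" unfolding Dt nD ..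
  have wnn: "\<And>i. w i \<ge> 0" unfolding w_def by (simp add: sum_nonneg)
  have c0nn: "c0 \<ge> 0" unfolding c0_def by simp
  have Gent: "G $ k $ i = inner (F $ k) (V $ i)" for k i
    by (simp add: G_def Vt_def matrix_matrix_mult_def transpose_def inner_vec_def)
  have coef: "coef_a F V i = sqrt (w i)" for i
    unfolding coef_a_def w_def Gent ..
  have Om: "\<Omega> = {j. w j \<noteq> 0}" unfolding \<Omega>_def coef by simp
  have FAt: "F ** transpose A = G ** diag_mat \<sigma> ** Ut"
    unfolding At G_def by (simp add: matrix_mul_assoc)
  have wex: "\<exists>i. w i > 0"
  proof (rule ccontr)
    assume "\<not> (\<exists>i. w i > 0)"
    then have "w i = 0" for i using wnn[of i] by (meson antisym not_less)
    then have "G $ k $ i = 0" for k i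
      unfolding w_def by (simp add: sum_nonneg_eq_0_iff)
    then have "G = 0" by (simp add: vec_eq_iff)
    then show False using FA_nz FAt by simp
  qed
  have "A \<noteq> 0"
  proof
    assume "A = 0"
    then have "transpose A = 0" by (simp add: transpose_def vec_eq_iff)
    then show False using FA_nz by simp
  qed
  then have NA: "(frob A)^2 > 0" unfolding frob_def by simp
  note R = real_part[of w \<sigma> lam c0 "(frob A)^2", OF wnn wex sigma_pos lam_pos c0nn NA]
  have ex: "(\<exists>i\<in>\<Omega>. \<exists>j\<in>\<Omega>. \<sigma> i \<noteq> \<sigma> j) = (\<exists>i j. w i \<noteq> 0 \<and> w j \<noteq> 0 \<and> \<sigma> i \<noteq> \<sigma> j)"
    unfolding Om by auto
  show ?thesis
    unfolding fit_err_def spec_risk_def abs_spec_risk_def fS fT aS aT dS dT ex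
    using R(1) R(2) R(3) R(4) by simp
qed

end
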